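(* For every $\alpha\in\mathbb{R}$, the sequence $\{k+\alpha\}_{k=0}^{\infty}$ is not a Legendre multiplier sequence.
   Context: The Legendre polynomials $\mathfrak{Le}_n(x)$ are defined by $\frac{1}{\sqrt{1-2xt+t^2}}=\sum_{k=0}^{\infty}\mathfrak{Le}_k(x)t^k$. A real sequence $\{\gamma_k\}_{k=0}^{\infty}$ is a Legendre multiplier sequence if, for every $n$ and all real $a_0,\dots,a_n$, the polynomial $\sum_{k=0}^n a_k\gamma_k\mathfrak{Le}_k(x)$ has only real zeros whenever $\sum_{k=0}^n a_k\mathfrak{Le}_k(x)$ has only real zeros. *)

theory Defs
  imports "HOL-Analysis.Analysis" "HOL-Computational_Algebra.Formal_Power_Series"
begin

text \<open>Legendre polynomials via the generating function
  (1 - 2 x t + t^2)^(-1/2) = sum_k Le_k(x) t^k, taken as a formal power series in t: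
  (1 + u)^(-1/2) composed with u = -2 x t + t^2. Evaluated at complex x so that
  complex zeros can be discussed.\<close>
definition legendre :: "nat \<Rightarrow> complex \<Rightarrow> complex" where
  "legendre k x = fps_nth (fps_compose (fps_binomial (-1/2))
      (fps_const (-2 * x) * fps_X + fps_X ^ 2)) k"

definition only_real_zeros :: "(complex \<Rightarrow> complex) \<Rightarrow> bool" where
  "only_real_zeros f \<longleftrightarrow> (\<forall>z. f z = 0) \<or> (\<forall>z. f z = 0 \<longrightarrow> z \<in> \<real>)"

definition legendre_multiplier_sequence :: "(nat \<Rightarrow> real) \<Rightarrow> bool" where
  "legendre_multiplier_sequence \<gamma> \<longleftrightarrow>
     (\<forall>n (a :: nat \<Rightarrow> real).
        only_real_zeros (\<lambda>x. \<Sum>k\<le>n. of_real (a k) * legendre k x) \<longrightarrow>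
        only_real_zeros (\<lambda>x. \<Sum>k\<le>n. of_real (a k * \<gamma> k) * legendre k x))"

end

theory Submission
  imports Defs
begin
lemma cX_pow_nth: "fps_nth ((fps_const (c::complex) + fps_X) ^ i) j = of_nat (i choose j) * c ^ (i - j)"
proof (induction i arbitrary: j)
  case 0 then show ?case by simp
next
  case (Suc i)
  have e: "((fps_const c + fps_X) ^ Suc i) = fps_const c * (fps_const c + fps_X) ^ i + fps_X * (fps_const c + fps_X) ^ i"
      by (simp add: algebra_simps)
  show ?case
  proof (cases j)
    case 0 then show ?thesis using Suc by (simp add: e)
  next
    case (Suc j') 
    have g: "fps_nth ((fps_const c + fps_X) ^ Suc i) j = c * (of_nat (i choose Suc j') * c ^ (i - Suc j')) + of_nat (i choose j') * c ^ (i - j')"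
      using Suc.IH Suc unfolding e by (simp del: power_Suc)
    show ?thesis
    proof (cases "j' < i")
      case True
      then have "i - j' = Suc (i - Suc j')" by simp
      then show ?thesis unfolding g using Suc by (simp add: algebra_simps)
    next
      case False
      then show ?thesis unfolding g using Suc by simp
    qed
  qed
qed
lemma b_pow_nth: "fps_nth ((fps_const c * fps_X + fps_X ^ 2) ^ i) n = (if n < i then 0 else of_nat (i choose (n - i)) * (c::complex) ^ (i - (n - i)))"
proof -
  have "((fps_const c * fps_X + fps_X ^ 2) ^ i) = fps_X ^ i * (fps_const (c::complex) + fps_X) ^ i"
  by (simp add: power2_eq_square power_mult_distrib[symmetric] algebra_simps)
  then show ?thesis by (simp only: fps_X_power_mult_nth cX_pow_nth)
qed
lemma leg: "legendre k x = (\<Sum>i=0..k. ((-1/2) gchoose i) * (if k < i then 0 else of_nat (i choose (k - i)) * (-2*x) ^ (i - (k - i))))"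
  unfolding legendre_def fps_compose_nth b_pow_nth by simp

lemma leg0: "legendre 0 x = 1" unfolding leg by simp
lemma leg1: "legendre 1 x = x" unfolding leg by (simp add: gbinomial_Suc numeral_eq_Suc field_simps)
lemma leg2: "legendre 2 x = (3*x^2 - 1)/2" unfolding leg by (simp add: gbinomial_Suc numeral_eq_Suc field_simps)
lemma leg3: "legendre 3 x = (5*x^3 - 3*x)/2" unfolding leg by (simp add: gbinomial_Suc numeral_eq_Suc field_simps)
lemma leg4: "legendre 4 x = (35*x^4 - 30*x^2+3)/8" unfolding leg by (simp add: gbinomial_Suc numeral_eq_Suc field_simps)

lemma sum4: "(\<Sum>k\<le>4::nat. f k) = f 0 + f 1 + f 2 + f 3 + (f 4 :: complex)"
  by (simp add: numeral_eq_Suc atMost_Suc algebra_simps)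
lemma sum2: "(\<Sum>k\<le>2::nat. f k) = f 0 + f 1 + (f 2 :: complex)"
  by (simp add: numeral_eq_Suc atMost_Suc algebra_simps)

theorem proposition4p3:
  fixes \<alpha> :: real
  shows "\<not> legendre_multiplier_sequence (\<lambda>k. real k + \<alpha>)"
proof
  assume L: "legendre_multiplier_sequence (\<lambda>k. real k + \<alpha>)"
  show False
  proof (cases "\<alpha> \<ge> -2")
    case True
    define a :: "nat \<Rightarrow> real" where "a k = (if k=0 then 1/5 else if k=2 then 4/7 else if k=4 then 8/35 else 0)" for k
    have p: "(\<Sum>k\<le>4. of_real (a k) * legendre k x) = x^4" for x
      unfolding sum4 a_def by (simp add: leg0 leg1 leg2 leg3 leg4 field_simps)
    have q: "(\<Sum>k\<le>4. of_real (a k * (real k + \<alpha>)) * legendre k x)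
       = (4 + of_real \<alpha>) * x^4 - 12/7 * x^2 - 8/35" for x
      unfolding sum4 a_def by (simp add: leg0 leg1 leg2 leg3 leg4 field_simps)
    have "only_real_zeros (\<lambda>x. \<Sum>k\<le>4. of_real (a k) * legendre k x)"
      unfolding p only_real_zeros_def by simp
    with L have "only_real_zeros (\<lambda>x. \<Sum>k\<le>4. of_real (a k * (real k + \<alpha>)) * legendre k x)"
      unfolding legendre_multiplier_sequence_def by blast
    then have R: "only_real_zeros (\<lambda>x. (4 + of_real \<alpha>) * x^4 - 12/7 * x^2 - 8/35)"
      by (simp only: q)
    define g where "g t = (4 + \<alpha>) * t^4 + 12/7 * t^2 - 8/35" for t
    have "\<exists>t. 0 \<le> t \<and> t \<le> 1 \<and> g t = 0"
      by (rule IVT') (use True in \<open>auto simp: g_def intro!: continuous_intros\<close>)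
    then obtain t where t: "0 \<le> t" "g t = 0" by blast
    have t0: "t \<noteq> 0" using t by (auto simp: g_def)
    have "(4 + of_real \<alpha>) * (\<i> * of_real t)^4 - 12/7 * (\<i> * of_real t)^2 - 8/35 = complex_of_real (g t)"
      by (simp add: g_def power_mult_distrib field_simps)
    then have z: "(4 + of_real \<alpha>) * (\<i> * of_real t)^4 - 12/7 * (\<i> * of_real t)^2 - 8/35 = (0::complex)"
      using t by simp
    have nr: "\<i> * complex_of_real t \<notin> \<real>" using t0 by (auto simp: complex_is_Real_iff)
    show False using R z nr unfolding only_real_zeros_def
    proof -
      have "\<not> (\<forall>z. (4 + complex_of_real \<alpha>) * z ^ 4 - 12 / 7 * z^2 - 8 / 35 = 0)"
      proof
        assume h: "\<forall>z. (4 + complex_of_real \<alpha>) * z ^ 4 - 12 / 7 * z^2 - 8 / 35 = 0"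
        from h[rule_format, of 0] show False by simp
      qed
      then show False using R z nr unfolding only_real_zeros_def by blast
    qed
  next
    case False
    define a :: "nat \<Rightarrow> real" where "a k = (if k=0 then 1/3 else if k=2 then 2/3 else 0)" for k
    have p: "(\<Sum>k\<le>2. of_real (a k) * legendre k x) = x^2" for x
      unfolding sum2 a_def by (simp add: leg0 leg1 leg2 field_simps)
    have q: "(\<Sum>k\<le>2. of_real (a k * (real k + \<alpha>)) * legendre k x)
       = (2 + of_real \<alpha>) * x^2 - 2/3" for x
      unfolding sum2 a_def by (simp add: leg0 leg1 leg2 field_simps)
    have "only_real_zeros (\<lambda>x. \<Sum>k\<le>2. of_real (a k) * legendre k x)"
      unfolding p only_real_zeros_def by simp
    with L have "only_real_zeros (\<lambda>x. \<Sum>k\<le>2. of_real (a k * (real k + \<alpha>)) * legendre k x)"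
      unfolding legendre_multiplier_sequence_def by blast
    then have R: "only_real_zeros (\<lambda>x. (2 + of_real \<alpha>) * x^2 - 2/3)"
      by (simp only: q)
    define t where "t = sqrt (2 / (3 * (-2 - \<alpha>)))"
    have tt: "t^2 = 2 / (3 * (-2 - \<alpha>))" unfolding t_def using False by simp
    have t0: "t \<noteq> 0" using tt False by auto
    have "(2 + of_real \<alpha>) * (\<i> * of_real t)^2 - 2/3 = complex_of_real (- (2 + \<alpha>) * t^2 - 2/3)"
      by (simp add: power_mult_distrib field_simps)
    also have "- (2 + \<alpha>) * t^2 - 2/3 = 0" unfolding tt using False by (simp add: field_simps)
    finally have z: "(2 + of_real \<alpha>) * (\<i> * of_real t)^2 - 2/3 = (0::complex)" by simp
    have nr: "\<i> * complex_of_real t \<notin> \<real>" using t0 by (auto simp: complex_is_Real_iff)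
    show False using R z nr unfolding only_real_zeros_def
    proof -
      have "\<not> (\<forall>z. (2 + complex_of_real \<alpha>) * z ^ 2 - 2 / 3 = 0)"
      proof
        assume h: "\<forall>z. (2 + complex_of_real \<alpha>) * z ^ 2 - 2 / 3 = 0"
        from h[rule_format, of 0] show False by simp
      qed
      then show False using R z nr unfolding only_real_zeros_def by blast
    qed
  qed
qed
end
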